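(* Let $s\in\{0,\tfrac12\}$, $\lambda\in\mathbb{C}$, and let $\sigma\in\mathrm{Aut}(\mathfrak{L}^s_\lambda)$ be normalized, i.e. there are $\epsilon\in\{1,-1\}$, $\alpha,\mu\in\mathbb{C}\setminus\{0\}$, $\beta\in\mathbb{C}$ with $\sigma(L_m)=\epsilon\alpha^mL_{\epsilon m}+m\alpha^m\beta I_{\epsilon m}$ and $\sigma(I_m)=\alpha^m\mu I_{\epsilon m}$ for all $m\in\mathbb{Z}$. Then for every $p\in s+\mathbb{Z}$ there is $h_p\in\mathbb{C}$ with $\sigma(H_p)=h_pH_{\epsilon p}$.
   Context: For $s\in\{0,\tfrac12\}$ and $\lambda\in\mathbb{C}$, $\mathfrak{L}^s_\lambda$ is the complex Lie superalgebra with basis $\{L_m,I_m,G_p,H_p : m\in\mathbb{Z},\ p\in s+\mathbb{Z}\}$, even part spanned by the $L_m,I_m$, odd part spanned by the $G_p,H_p$, with brackets $[L_m,L_n]=(m-n)L_{m+n}$, $[L_m,I_n]=(m-n)I_{m+n}$, $[L_m,H_p]=(\tfrac m2-p)H_{m+p}$, $[L_m,G_p]=(\tfrac m2-p)G_{m+p}+\lambda(m+1)H_{m+p}$, $[I_m,G_p]=(m-2p)H_{m+p}$, $[G_p,G_q]=I_{p+q}$, plus super-antisymmetry; all other brackets of basis elements are zero. $\mathrm{Aut}(\mathfrak{L})$ is the group of bijective parity-preserving linear maps $\sigma$ with $\sigma([x,y])=[\sigma(x),\sigma(y)]$. *)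

theory Defs
  imports Complex_Main
begin

datatype basis = L int | I int | G rat | H rat

definition valid_idx :: "rat \<Rightarrow> basis \<Rightarrow> bool" where
  "valid_idx s b = (case b of L m \<Rightarrow> True | I m \<Rightarrow> True
                    | G p \<Rightarrow> p - s \<in> \<int> | H p \<Rightarrow> p - s \<in> \<int>)"

definition is_even_b :: "basis \<Rightarrow> bool" where
  "is_even_b b = (case b of L m \<Rightarrow> True | I m \<Rightarrow> True | G p \<Rightarrow> False | H p \<Rightarrow> False)"

type_synonym vec = "basis \<Rightarrow> complex"

definition supp :: "vec \<Rightarrow> basis set" where
  "supp x = {b. x b \<noteq> 0}"

definition V :: "rat \<Rightarrow> vec set" where
  "V s = {x. finite (supp x) \<and> (\<forall>b\<in>supp x. valid_idx s b)}"

definition evenV :: "rat \<Rightarrow> vec set" where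
  "evenV s = {x \<in> V s. \<forall>b\<in>supp x. is_even_b b}"

definition oddV :: "rat \<Rightarrow> vec set" where
  "oddV s = {x \<in> V s. \<forall>b\<in>supp x. \<not> is_even_b b}"

definition zv :: vec where "zv = (\<lambda>c. 0)"

definition addv :: "vec \<Rightarrow> vec \<Rightarrow> vec" where
  "addv x y = (\<lambda>c. x c + y c)"

definition e :: "basis \<Rightarrow> vec" where
  "e b = (\<lambda>c. if c = b then 1 else 0)"

definition scl :: "complex \<Rightarrow> vec \<Rightarrow> vec" where
  "scl a x = (\<lambda>c. a * x c)"

fun bb :: "complex \<Rightarrow> basis \<Rightarrow> basis \<Rightarrow> vec" where
  "bb lam (L m) (L n) = scl (of_int (m - n)) (e (L (m + n)))"
| "bb lam (L m) (I n) = scl (of_int (m - n)) (e (I (m + n)))"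
| "bb lam (I n) (L m) = scl (- of_int (m - n)) (e (I (m + n)))"
| "bb lam (L m) (H p) = scl (of_int m / 2 - of_rat p) (e (H (of_int m + p)))"
| "bb lam (H p) (L m) = scl (- (of_int m / 2 - of_rat p)) (e (H (of_int m + p)))"
| "bb lam (L m) (G p) = addv (scl (of_int m / 2 - of_rat p) (e (G (of_int m + p)))) (scl (lam * of_int (m + 1)) (e (H (of_int m + p))))"
| "bb lam (G p) (L m) = addv (scl (- (of_int m / 2 - of_rat p)) (e (G (of_int m + p)))) (scl (- (lam * of_int (m + 1))) (e (H (of_int m + p))))"
| "bb lam (I m) (G p) = scl (of_int m - 2 * of_rat p) (e (H (of_int m + p)))"
| "bb lam (G p) (I m) = scl (- (of_int m - 2 * of_rat p)) (e (H (of_int m + p)))"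
| "bb lam (G p) (G q) = e (I \<lfloor>p + q\<rfloor>)"
| "bb lam _ _ = zv"

definition br :: "complex \<Rightarrow> vec \<Rightarrow> vec \<Rightarrow> vec" where
  "br lam x y = (\<lambda>c. \<Sum>a\<in>supp x. \<Sum>b\<in>supp y. x a * y b * bb lam a b c)"

definition is_aut :: "rat \<Rightarrow> complex \<Rightarrow> (vec \<Rightarrow> vec) \<Rightarrow> bool" where
  "is_aut s lam \<sigma> \<longleftrightarrow>
     bij_betw \<sigma> (V s) (V s)
   \<and> (\<forall>x\<in>V s. \<forall>y\<in>V s. \<sigma> (addv x y) = addv (\<sigma> x) (\<sigma> y))
   \<and> (\<forall>a. \<forall>x\<in>V s. \<sigma> (scl a x) = scl a (\<sigma> x))
   \<and> \<sigma> ` evenV s \<subseteq> evenV s \<and> \<sigma> ` oddV s \<subseteq> oddV s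
   \<and> (\<forall>x\<in>V s. \<forall>y\<in>V s. \<sigma> (br lam x y) = br lam (\<sigma> x) (\<sigma> y))"

end

theory Submission
  imports Defs
begin

lemma supp_e[simp]: "supp (e b) = {b}"
  by (auto simp: supp_def e_def)

lemma e_in_V: "valid_idx s b \<Longrightarrow> e b \<in> V s"
  by (simp add: V_def)

lemma br_ee: "br lam (e a) (e b) = bb lam a b"
  by (simp add: br_def, simp add: e_def)

lemma br_single:
  assumes "supp x \<subseteq> {a}" "finite (supp y)"
  shows "br lam x y c = (\<Sum>b\<in>supp y. x a * y b * bb lam a b c)"
proof (cases "a \<in> supp x")
  case True
  then have "supp x = {a}" using assms by auto
  then show ?thesis by (simp add: br_def)
next
  case False
  then have "supp x = {}" "x a = 0" using assms by (auto simp: supp_def)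
  then show ?thesis by (simp add: br_def)
qed

lemma sum_single:
  assumes "finite S" "\<And>b. b \<in> S \<Longrightarrow> b \<noteq> c0 \<Longrightarrow> f b = 0" "c0 \<notin> S \<Longrightarrow> f c0 = 0"
  shows "sum f S = f c0"
proof (cases "c0 \<in> S")
  case True
  then have "sum f S = f c0 + sum f (S - {c0})" using assms(1) by (simp add: sum.remove)
  also have "sum f (S - {c0}) = 0" using assms(2) by (intro sum.neutral) auto
  finally show ?thesis by simp
next
  case False
  then have "\<forall>b\<in>S. f b = 0" using assms(2) by auto
  then show ?thesis using assms(3) False by simp
qed

theorem lemma3p4:
  fixes s :: rat and lam :: complex and \<sigma> :: "vec \<Rightarrow> vec"
    and \<epsilon> :: int and \<alpha> \<mu> \<beta> :: complex
  assumes "s = 0 \<or> s = 1/2"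
    and "is_aut s lam \<sigma>"
    and "\<epsilon> = 1 \<or> \<epsilon> = -1"
    and "\<alpha> \<noteq> 0" and "\<mu> \<noteq> 0"
    and "\<And>m. \<sigma> (e (L m)) = addv (scl (of_int \<epsilon> * \<alpha> powi m) (e (L (\<epsilon> * m))))
                            (scl (of_int m * \<alpha> powi m * \<beta>) (e (I (\<epsilon> * m))))"
    and "\<And>m. \<sigma> (e (I m)) = scl (\<alpha> powi m * \<mu>) (e (I (\<epsilon> * m)))"
  shows "\<forall>p. p - s \<in> \<int> \<longrightarrow> (\<exists>h. \<sigma> (e (H p)) = scl h (e (H (of_int \<epsilon> * p))))"
proof (intro allI impI)
  fix p assume ps: "p - s \<in> \<int>"
  note aut = assms(2)[unfolded is_aut_def]
  have scl_\<sigma>: "\<And>a x. x \<in> V s \<Longrightarrow> \<sigma> (scl a x) = scl a (\<sigma> x)"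
    using aut[THEN conjunct2, THEN conjunct2, THEN conjunct1] by blast
  have br_\<sigma>: "\<And>x y. x \<in> V s \<Longrightarrow> y \<in> V s \<Longrightarrow> \<sigma> (br lam x y) = br lam (\<sigma> x) (\<sigma> y)"
    using aut[THEN conjunct2, THEN conjunct2, THEN conjunct2, THEN conjunct2, THEN conjunct2] by blast
  have eH: "e (H p) \<in> oddV s" using ps by (simp add: oddV_def V_def valid_idx_def is_even_b_def)
  hence eHV: "e (H p) \<in> V s" by (simp add: oddV_def)
  define y where "y = \<sigma> (e (H p))"
  have yodd: "y \<in> oddV s" using aut[THEN conjunct2, THEN conjunct2, THEN conjunct2, THEN conjunct2, THEN conjunct1] eH y_def by blast
  hence fin: "finite (supp y)" and yodd': "\<And>b. b \<in> supp y \<Longrightarrow> \<not> is_even_b b"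
    by (auto simp: oddV_def V_def)
  have yL: "y (L m) = 0" for m using yodd'[of "L m"] by (auto simp: supp_def is_even_b_def)
  have yI: "y (I m) = 0" for m using yodd'[of "I m"] by (auto simp: supp_def is_even_b_def)
  have eps2: "\<epsilon> * \<epsilon> = 1" using assms(3) by auto
  have yG: "y (G q) = 0" for q
  proof -
    obtain m :: int where m: "of_int (\<epsilon> * m) - 2 * of_rat q \<noteq> (0::complex)"
    proof (cases "q = 0")
      case True
      then show ?thesis using that[of 1] assms(3) by auto
    next
      case False
      then show ?thesis using that[of 0] by auto
    qed
    define k where "k = \<alpha> powi m * \<mu>"
    have k0: "k \<noteq> 0" using assms(4,5) by (simp add: k_def)
    have eIV: "e (I m) \<in> V s" by (simp add: e_in_V valid_idx_def)
    have "br lam (e (I m)) (e (H p)) = scl 0 (e (H p))"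
      by (simp add: br_ee scl_def zv_def)
    hence "\<sigma> (br lam (e (I m)) (e (H p))) = scl 0 y"
      using scl_\<sigma>[OF eHV] y_def by simp
    hence "br lam (scl k (e (I (\<epsilon> * m)))) y = scl 0 y"
      using br_\<sigma>[OF eIV eHV] assms(7) y_def k_def by simp
    hence "br lam (scl k (e (I (\<epsilon> * m)))) y (H (of_int (\<epsilon> * m) + q)) = 0"
      by (simp add: scl_def)
    moreover have "supp (scl k (e (I (\<epsilon> * m)))) \<subseteq> {I (\<epsilon> * m)}"
      by (auto simp: supp_def scl_def e_def)
    ultimately have "(\<Sum>b\<in>supp y. scl k (e (I (\<epsilon> * m))) (I (\<epsilon> * m)) * y b * bb lam (I (\<epsilon> * m)) b (H (of_int (\<epsilon> * m) + q))) = 0"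
      using br_single fin by metis
    moreover have "(\<Sum>b\<in>supp y. scl k (e (I (\<epsilon> * m))) (I (\<epsilon> * m)) * y b * bb lam (I (\<epsilon> * m)) b (H (of_int (\<epsilon> * m) + q)))
       = k * y (G q) * (of_int (\<epsilon> * m) - 2 * of_rat q)"
    proof -
      have "(\<Sum>b\<in>supp y. scl k (e (I (\<epsilon> * m))) (I (\<epsilon> * m)) * y b * bb lam (I (\<epsilon> * m)) b (H (of_int (\<epsilon> * m) + q)))
         = scl k (e (I (\<epsilon> * m))) (I (\<epsilon> * m)) * y (G q) * bb lam (I (\<epsilon> * m)) (G q) (H (of_int (\<epsilon> * m) + q))"
      proof (rule sum_single[OF fin])
        fix b assume "b \<in> supp y" "b \<noteq> G q"
        then show "scl k (e (I (\<epsilon> * m))) (I (\<epsilon> * m)) * y b * bb lam (I (\<epsilon> * m)) b (H (of_int (\<epsilon> * m) + q)) = 0"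
          by (cases b) (auto simp: scl_def e_def zv_def)
      next
        assume "G q \<notin> supp y"
        then show "scl k (e (I (\<epsilon> * m))) (I (\<epsilon> * m)) * y (G q) * bb lam (I (\<epsilon> * m)) (G q) (H (of_int (\<epsilon> * m) + q)) = 0"
          by (simp add: supp_def)
      qed
      also have "\<dots> = k * y (G q) * (of_int (\<epsilon> * m) - 2 * of_rat q)"
        by (simp add: scl_def e_def)
      finally show ?thesis .
    qed
    ultimately show ?thesis using k0 m by simp
  qed
  have yH: "y (H q) = 0" if qne: "q \<noteq> of_int \<epsilon> * p" for q
  proof -
    have eLV: "e (L 0) \<in> V s" by (simp add: e_in_V valid_idx_def)
    have "br lam (e (L 0)) (e (H p)) = scl (- of_rat p) (e (H p))"
      by (simp add: br_ee)
    hence "\<sigma> (br lam (e (L 0)) (e (H p))) = scl (- of_rat p) y"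
      using scl_\<sigma>[OF eHV] y_def by simp
    hence eq: "br lam (\<sigma> (e (L 0))) y = scl (- of_rat p) y"
      using br_\<sigma>[OF eLV eHV] y_def by simp
    have sL: "supp (\<sigma> (e (L 0))) \<subseteq> {L 0}"
      unfolding assms(6) by (auto simp: supp_def scl_def e_def addv_def)
    have sL0: "\<sigma> (e (L 0)) (L 0) = of_int \<epsilon>"
      unfolding assms(6) by (simp add: scl_def e_def addv_def)
    have "(\<Sum>b\<in>supp y. \<sigma> (e (L 0)) (L 0) * y b * bb lam (L 0) b (H q)) = - of_rat p * y (H q)"
      using br_single[OF sL fin, of lam "H q"] eq by (simp add: scl_def)
    moreover have "(\<Sum>b\<in>supp y. \<sigma> (e (L 0)) (L 0) * y b * bb lam (L 0) b (H q)) = of_int \<epsilon> * y (H q) * (- of_rat q)"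
    proof -
      have "(\<Sum>b\<in>supp y. \<sigma> (e (L 0)) (L 0) * y b * bb lam (L 0) b (H q)) = \<sigma> (e (L 0)) (L 0) * y (H q) * bb lam (L 0) (H q) (H q)"
      proof (rule sum_single[OF fin])
        fix b assume "b \<in> supp y" "b \<noteq> H q"
        then show "\<sigma> (e (L 0)) (L 0) * y b * bb lam (L 0) b (H q) = 0"
          by (cases b) (auto simp: scl_def e_def zv_def addv_def yG)
      next
        assume "H q \<notin> supp y"
        then show "\<sigma> (e (L 0)) (L 0) * y (H q) * bb lam (L 0) (H q) (H q) = 0"
          by (simp add: supp_def)
      qed
      also have "\<dots> = of_int \<epsilon> * y (H q) * (- of_rat q)"
        by (simp only: sL0, simp add: scl_def e_def)
      finally show ?thesis .
    qed
    ultimately have "(of_rat p - of_int \<epsilon> * of_rat q) * y (H q) = (0::complex)"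
      by (simp add: algebra_simps)
    moreover have "of_rat p - of_int \<epsilon> * of_rat q \<noteq> (0::complex)"
    proof
      assume "of_rat p - of_int \<epsilon> * of_rat q = (0::complex)"
      hence "of_rat p = (of_rat (of_int \<epsilon> * q) :: complex)" by (simp add: of_rat_mult)
      hence "p = of_int \<epsilon> * q" by simp
      hence "of_int \<epsilon> * p = of_int (\<epsilon> * \<epsilon>) * q" by simp
      thus False using qne eps2 by simp
    qed
    ultimately show ?thesis by simp
  qed
  have "y = scl (y (H (of_int \<epsilon> * p))) (e (H (of_int \<epsilon> * p)))"
  proof
    fix c show "y c = scl (y (H (of_int \<epsilon> * p))) (e (H (of_int \<epsilon> * p))) c"
      by (cases c) (auto simp: scl_def e_def yL yI yG yH)
  qed
  thus "\<exists>h. \<sigma> (e (H p)) = scl h (e (H (of_int \<epsilon> * p)))" using y_def by blast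
qed

end
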